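(* For every $k\ge1$, $$p_k=\sum_{d\ge1}\frac{\hat\mu(d)}{d}\ln\bigl(1+\overline{p}_{dk}\bigr),$$ and consequently for every partition $\lambda$, $$p_\lambda=\sum_{d,n}\ \prod_{i=1}^{\ell(\lambda)}\frac{\hat\mu(d_i)(-1)^{n_i+1}}{d_in_i}\ \overline{p}_{(d\lambda)^n},$$ the sum over pairs of sequences $d,n$ of positive integers of length $\ell(\lambda)$.
   Context: $p_k=\sum_ix_i^k$; $1+\overline{p}_k=\prod_{i\ge1}(1+x_i^k)$, $\overline{p}_\lambda=\prod_i\overline{p}_{\lambda_i}$. $\hat\mu(n)=\mu(n)$ for $n$ odd and $\hat\mu(n)=2^{j-1}\mu(n/2^j)$ for $n$ even with $2^j$ the exact power of 2 dividing $n$ ($\mu$ the Möbius function). $(d\lambda)^n$ is the partition obtained by replacing each part $\lambda_i$ by $n_i$ copies of $d_i\lambda_i$, sorted. Identities hold in the degree-completed ring of symmetric functions. *)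

theory Defs
  imports Complex_Main "HOL-Library.Poly_Mapping" "HOL-Computational_Algebra.Squarefree"
begin

text \<open>Degree-completed ring of symmetric functions in variables x_1, x_2, ...
  (indexed here by nat), realised inside the ring of formal power series in
  countably many variables with real coefficients: a series is its coefficient
  function on monomials (finitely supported exponent vectors).\<close>

type_synonym mono = "nat \<Rightarrow>\<^sub>0 nat"
type_synonym sf = "mono \<Rightarrow> real"

definition sf_one :: sf where
  "sf_one m = (if m = 0 then 1 else 0)"

definition sf_mult :: "sf \<Rightarrow> sf \<Rightarrow> sf" where
  "sf_mult f g m = (\<Sum>(a, b) \<in> {(a, b). a + b = m}. f a * g b)"

definition sf_scale :: "real \<Rightarrow> sf \<Rightarrow> sf" where
  "sf_scale c f m = c * f m"

fun sf_pow :: "sf \<Rightarrow> nat \<Rightarrow> sf" where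
  "sf_pow f 0 = sf_one"
| "sf_pow f (Suc n) = sf_mult f (sf_pow f n)"

text \<open>Formal (coefficientwise) infinite sum of a family of series; all sums
  used below are locally finite (each coefficient receives finitely many
  nonzero contributions), in which case this is the sum in the completed ring.\<close>
definition sf_sum :: "('i \<Rightarrow> sf) \<Rightarrow> 'i set \<Rightarrow> sf" where
  "sf_sum F I m = (\<Sum>i \<in> {i \<in> I. F i m \<noteq> 0}. F i m)"

definition sf_prod_list :: "sf list \<Rightarrow> sf" where
  "sf_prod_list fs = foldr sf_mult fs sf_one"

definition sf_ln1p :: "sf \<Rightarrow> sf" where
  "sf_ln1p f = sf_sum (\<lambda>n. sf_scale ((-1) ^ (n + 1) / real n) (sf_pow f n)) {1..}"

definition psum :: "nat \<Rightarrow> sf" where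
  "psum k m = (if (\<exists>i. m = Poly_Mapping.single i k) then 1 else 0)"

text \<open>pbar_k defined by 1 + pbar_k = prod_i (1 + x_i^k): expanding the product,
  pbar_k = sum over nonempty finite sets S of prod_{i in S} x_i^k, i.e. the
  coefficient of a monomial is 1 iff it is nonzero and all its exponents lie in {0,k}.\<close>
definition pbar :: "nat \<Rightarrow> sf" where
  "pbar k m = (if m \<noteq> 0 \<and> (\<forall>i. Poly_Mapping.lookup m i = 0 \<or> Poly_Mapping.lookup m i = k) then 1 else 0)"

definition is_partition :: "nat list \<Rightarrow> bool" where
  "is_partition lam \<longleftrightarrow> sorted_wrt (\<ge>) lam \<and> (\<forall>x \<in> set lam. 0 < x)"

definition psum_part :: "nat list \<Rightarrow> sf" where
  "psum_part lam = sf_prod_list (map psum lam)"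

definition pbar_part :: "nat list \<Rightarrow> sf" where
  "pbar_part lam = sf_prod_list (map pbar lam)"

definition dpow_part :: "nat list \<Rightarrow> nat list \<Rightarrow> nat list \<Rightarrow> nat list" where
  "dpow_part lam d n =
     rev (sort (concat (map (\<lambda>i. replicate (n ! i) (d ! i * lam ! i)) [0..<length lam])))"

definition moebius :: "nat \<Rightarrow> int" where
  "moebius n = (if n = 0 \<or> \<not> squarefree n then 0 else (-1) ^ card (prime_factors n))"

definition muhat :: "nat \<Rightarrow> real" where
  "muhat n = (if odd n then real_of_int (moebius n)
              else 2 ^ (multiplicity (2::nat) n - 1) *
                   real_of_int (moebius (n div 2 ^ multiplicity (2::nat) n)))"

end

theory Submission
  imports Defs "HOL-Library.FuncSet" "HOL-Library.Multiset"
begin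

definition mdeg :: "mono \<Rightarrow> nat" where
  "mdeg m = (\<Sum>k\<in>Poly_Mapping.keys m. Poly_Mapping.lookup m k)"

lemma mdeg_add: "mdeg (a + b) = mdeg a + mdeg b"
  unfolding mdeg_def by (rule setsum_keys_plus_distrib) auto

lemma mdeg_zero[simp]: "mdeg 0 = 0" by (simp add: mdeg_def)

lemma mdeg_eq_0_iff: "mdeg m = 0 \<longleftrightarrow> m = 0"
proof
  assume "mdeg m = 0"
  then have "\<forall>k\<in>Poly_Mapping.keys m. Poly_Mapping.lookup m k = 0"
    unfolding mdeg_def by (simp add: sum_eq_0_iff)
  show "m = 0"
  proof (rule poly_mapping_eqI)
    fix k show "Poly_Mapping.lookup m k = Poly_Mapping.lookup 0 k"
      using \<open>\<forall>k\<in>Poly_Mapping.keys m. Poly_Mapping.lookup m k = 0\<close>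
      by (cases "k \<in> Poly_Mapping.keys m") (auto simp: in_keys_iff)
  qed
qed simp

lemma mdeg_single[simp]: "mdeg (Poly_Mapping.single i j) = j"
  by (cases "j = 0") (auto simp: mdeg_def)

lemma lookup_le_mdeg: "Poly_Mapping.lookup m i \<le> mdeg m"
proof (cases "i \<in> Poly_Mapping.keys m")
  case True then show ?thesis unfolding mdeg_def
    by (intro member_le_sum) auto
qed (simp add: in_keys_iff)

definition pairs :: "mono \<Rightarrow> (mono \<times> mono) set" where
  "pairs m = {(a, b). a + b = m}"

lemma finite_below: "finite {a::mono. \<forall>i. Poly_Mapping.lookup a i \<le> Poly_Mapping.lookup m i}"
  (is "finite ?A")
proof -
  let ?f = "\<lambda>a::mono. restrict (Poly_Mapping.lookup a) (Poly_Mapping.keys m)"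
  have "?f ` ?A \<subseteq> PiE (Poly_Mapping.keys m) (\<lambda>i. {0..Poly_Mapping.lookup m i})"
    by (auto simp: PiE_def)
  moreover have "finite (PiE (Poly_Mapping.keys m) (\<lambda>i. {0..Poly_Mapping.lookup m i}))"
    by (intro finite_PiE) auto
  ultimately have "finite (?f ` ?A)" by (rule finite_subset)
  moreover have "inj_on ?f ?A"
  proof (rule inj_onI)
    fix a b assume a: "a \<in> ?A" and b: "b \<in> ?A" and e: "?f a = ?f b"
    show "a = b"
    proof (rule poly_mapping_eqI)
      fix i show "Poly_Mapping.lookup a i = Poly_Mapping.lookup b i"
      proof (cases "i \<in> Poly_Mapping.keys m")
        case True then show ?thesis using fun_cong[OF e, of i] by simp
      next
        case False
        then have "Poly_Mapping.lookup m i = 0" by (simp add: in_keys_iff)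
        moreover have "Poly_Mapping.lookup a i \<le> Poly_Mapping.lookup m i"
          "Poly_Mapping.lookup b i \<le> Poly_Mapping.lookup m i" using a b by auto
        ultimately show ?thesis by simp
      qed
    qed
  qed
  ultimately show ?thesis by (rule finite_imageD)
qed

lemma finite_pairs[simp]: "finite (pairs m)"
proof -
  let ?A = "{a::mono. \<forall>i. Poly_Mapping.lookup a i \<le> Poly_Mapping.lookup m i}"
  have "pairs m \<subseteq> ?A \<times> ?A"
    by (auto simp: pairs_def lookup_add)
  then show ?thesis by (rule finite_subset) (simp add: finite_below)
qed

lemma pairs_mdeg: "(a, b) \<in> pairs m \<Longrightarrow> mdeg a \<le> mdeg m \<and> mdeg b \<le> mdeg m"
  by (auto simp: pairs_def mdeg_add)

lemma sf_mult_pairs: "sf_mult f g m = (\<Sum>(a, b)\<in>pairs m. f a * g b)"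
  by (simp add: sf_mult_def pairs_def)

lemma sum_pairs_single:
  assumes "\<And>a b. (a, b) \<in> pairs m \<Longrightarrow> a \<noteq> 0 \<Longrightarrow> h a b = 0"
  shows "(\<Sum>(a, b)\<in>pairs m. h a b) = h 0 m"
proof -
  have "(\<Sum>(a, b)\<in>pairs m. h a b) = (\<Sum>(a, b)\<in>{(0, m)}. h a b)"
    apply (rule sum.mono_neutral_right)
    apply (rule finite_pairs)
    apply (simp add: pairs_def)
    using assms by (fastforce simp: pairs_def)
  then show ?thesis by simp
qed

lemma sum_pairs_swap: "(\<Sum>(a, b)\<in>pairs m. h a b) = (\<Sum>(a, b)\<in>pairs m. h b a)"
  by (rule sum.reindex_bij_witness[where i = "\<lambda>(a,b). (b,a)" and j = "\<lambda>(a,b). (b,a)"])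
     (auto simp: pairs_def add.commute)

lemma sum_pairs_assoc:
  "(\<Sum>(a, b)\<in>pairs m. (\<Sum>(c, d)\<in>pairs a. h c d b)) =
   (\<Sum>(c, a)\<in>pairs m. (\<Sum>(d, b)\<in>pairs a. h c d b))"
proof -
  have "(\<Sum>(a, b)\<in>pairs m. (\<Sum>(c, d)\<in>pairs a. h c d b)) =
        (\<Sum>p\<in>pairs m. (\<Sum>q\<in>pairs (fst p). h (fst q) (snd q) (snd p)))"
    by (simp add: split_def)
  also have "\<dots> = (\<Sum>pq\<in>Sigma (pairs m) (\<lambda>p. pairs (fst p)). h (fst (snd pq)) (snd (snd pq)) (snd (fst pq)))"
    by (subst sum.Sigma) (auto simp: split_def)
  also have "\<dots> = (\<Sum>pq\<in>Sigma (pairs m) (\<lambda>p. pairs (snd p)). h (fst (fst pq)) (fst (snd pq)) (snd (snd pq)))"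
    by (rule sum.reindex_bij_witness[where i = "\<lambda>((c, a), (d, b)). ((c + d, b), (c, d))"
         and j = "\<lambda>((a, b), (c, d)). ((c, d + b), (d, b))"])
       (clarsimp simp: pairs_def add.assoc)+
  also have "\<dots> = (\<Sum>p\<in>pairs m. (\<Sum>q\<in>pairs (snd p). h (fst p) (fst q) (snd q)))"
    by (subst sum.Sigma) (auto simp: split_def)
  also have "\<dots> = (\<Sum>(c, a)\<in>pairs m. (\<Sum>(d, b)\<in>pairs a. h c d b))"
    by (simp add: split_def)
  finally show ?thesis .
qed


lemma sf_mult_comm: "sf_mult f g = sf_mult g f"
  by (rule ext) (simp add: sf_mult_pairs sum_pairs_swap[where h="\<lambda>a b. f a * g b"] mult.commute)

lemma sf_mult_assoc: "sf_mult (sf_mult f g) h = sf_mult f (sf_mult g h)"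
proof (rule ext)
  fix m
  have "sf_mult (sf_mult f g) h m = (\<Sum>(a, b)\<in>pairs m. (\<Sum>(c, d)\<in>pairs a. f c * g d * h b))"
    by (simp add: sf_mult_pairs sum_distrib_right case_prod_beta)
  also have "\<dots> = (\<Sum>(c, a)\<in>pairs m. (\<Sum>(d, b)\<in>pairs a. f c * g d * h b))"
    by (rule sum_pairs_assoc)
  also have "\<dots> = sf_mult f (sf_mult g h) m"
    by (simp add: sf_mult_pairs sum_distrib_left case_prod_beta mult.assoc)
  finally show "sf_mult (sf_mult f g) h m = sf_mult f (sf_mult g h) m" .
qed

lemma sf_mult_one: "sf_mult sf_one g = g"
proof (rule ext)
  fix m
  have "sf_mult sf_one g m = (\<Sum>(a, b)\<in>pairs m. sf_one a * g b)" by (simp add: sf_mult_pairs)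
  also have "\<dots> = sf_one 0 * g m" by (rule sum_pairs_single) (simp add: sf_one_def)
  finally show "sf_mult sf_one g m = g m" by (simp add: sf_one_def)
qed

lemma sf_mult_distrib: "sf_mult (\<lambda>m. f m + g m) h = (\<lambda>m. sf_mult f h m + sf_mult g h m)"
  by (rule ext) (simp add: sf_mult_pairs distrib_right sum.distrib case_prod_beta)

typedef S = "UNIV :: sf set" morphisms co Ab by simp

lemma co_Ab[simp]: "co (Ab f) = f" by (simp add: Ab_inverse)

lemma S_eqI: "(\<And>m. co x m = co y m) \<Longrightarrow> x = y"
  by (metis co_inverse ext)

instantiation S :: comm_ring_1
begin
definition zero_S_def: "0 = Ab (\<lambda>_. 0)"
definition one_S_def: "1 = Ab sf_one"
definition plus_S_def: "x + y = Ab (\<lambda>m. co x m + co y m)"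
definition minus_S_def: "x - y = Ab (\<lambda>m. co x m - co y m)"
definition uminus_S_def: "- x = Ab (\<lambda>m. - co x m)"
definition times_S_def: "x * y = Ab (sf_mult (co x) (co y))"
instance proof
  fix a b c :: S
  show "a * b * c = a * (b * c)" by (simp add: times_S_def sf_mult_assoc)
  show "a * b = b * a" by (simp add: times_S_def sf_mult_comm)
  show "1 * a = a" by (simp add: times_S_def one_S_def sf_mult_one co_inverse)
  show "a + b + c = a + (b + c)" by (simp add: plus_S_def add.assoc)
  show "a + b = b + a" by (simp add: plus_S_def add.commute)
  show "0 + a = a" by (simp add: plus_S_def zero_S_def co_inverse)
  show "- a + a = 0" by (simp add: plus_S_def zero_S_def uminus_S_def)
  show "a - b = a + - b" by (simp add: plus_S_def minus_S_def uminus_S_def)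
  show "(a + b) * c = a * c + b * c" by (simp add: plus_S_def times_S_def sf_mult_distrib)
  show "(0::S) \<noteq> 1"
  proof
    assume "(0::S) = 1"
    then have "co 0 0 = co 1 0" by simp
    then show False by (simp add: zero_S_def one_S_def sf_one_def)
  qed
qed
end

lemma co_zero[simp]: "co 0 m = 0" by (simp add: zero_S_def)
lemma co_one: "co 1 m = (if m = 0 then 1 else 0)" by (simp add: one_S_def sf_one_def)
lemma co_add[simp]: "co (x + y) m = co x m + co y m" by (simp add: plus_S_def)
lemma co_diff[simp]: "co (x - y) m = co x m - co y m" by (simp add: minus_S_def)
lemma co_uminus[simp]: "co (- x) m = - co x m" by (simp add: uminus_S_def)
lemma co_mult: "co (x * y) m = (\<Sum>(a, b)\<in>pairs m. co x a * co y b)"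
  by (simp add: times_S_def sf_mult_pairs)
lemma co_sum[simp]: "co (sum f A) m = (\<Sum>i\<in>A. co (f i) m)"
  by (induction A rule: infinite_finite_induct) auto

lemma co_power: "co (x ^ n) = sf_pow (co x) n"
  by (induction n) (auto simp: one_S_def times_S_def)

lemma co_prod_list: "co (prod_list (map Ab fs)) = sf_prod_list fs"
  by (induction fs) (auto simp: sf_prod_list_def one_S_def times_S_def)

definition D :: "S \<Rightarrow> S" where "D x = Ab (\<lambda>m. real (mdeg m) * co x m)"
definition cst :: "real \<Rightarrow> S" where "cst c = Ab (\<lambda>m. if m = 0 then c else 0)"

lemma co_D: "co (D x) m = real (mdeg m) * co x m" by (simp add: D_def)
lemma co_cst: "co (cst c) m = (if m = 0 then c else 0)" by (simp add: cst_def)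

lemma co_cst_mult: "co (cst c * x) m = c * co x m"
proof -
  have "co (cst c * x) m = (\<Sum>(a, b)\<in>pairs m. co (cst c) a * co x b)" by (rule co_mult)
  also have "\<dots> = co (cst c) 0 * co x m" by (rule sum_pairs_single) (simp add: co_cst)
  finally show ?thesis by (simp add: co_cst)
qed

lemma cst_mult: "cst (a * b) = cst a * cst b"
  by (rule S_eqI) (simp add: co_cst_mult co_cst)
lemma cst_add: "cst (a + b) = cst a + cst b"
  by (rule S_eqI) (simp add: co_cst)
lemma cst_uminus: "cst (- a) = - cst a"
  by (rule S_eqI) (simp add: co_cst)
lemma cst_one: "cst 1 = 1"
  by (rule S_eqI) (simp add: co_cst co_one)
lemma cst_zero: "cst 0 = 0"
  by (rule S_eqI) (simp add: co_cst)
lemma cst_of_nat: "of_nat n = cst (real n)"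
  by (induction n) (simp_all add: cst_zero cst_add cst_one add.commute)

lemma D_add: "D (x + y) = D x + D y"
  by (rule S_eqI) (simp add: co_D distrib_left)
lemma D_diff: "D (x - y) = D x - D y"
  by (rule S_eqI) (simp add: co_D right_diff_distrib)
lemma D_zero: "D 0 = 0"
  by (rule S_eqI) (simp add: co_D)
lemma D_sum: "D (sum f A) = (\<Sum>i\<in>A. D (f i))"
  by (induction A rule: infinite_finite_induct) (simp_all add: D_zero D_add)

lemma D_mult: "D (x * y) = D x * y + x * D y"
proof (rule S_eqI)
  fix m
  have "co (D (x * y)) m = (\<Sum>(a, b)\<in>pairs m. real (mdeg m) * (co x a * co y b))"
    by (simp add: co_D co_mult sum_distrib_left case_prod_beta)
  also have "\<dots> = (\<Sum>(a, b)\<in>pairs m. (real (mdeg a) * co x a) * co y b + co x a * (real (mdeg b) * co y b))"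
    by (rule sum.cong) (auto simp: pairs_def mdeg_add algebra_simps)
  also have "\<dots> = co (D x * y + x * D y) m"
    by (simp add: co_mult co_D sum.distrib case_prod_beta)
  finally show "co (D (x * y)) m = co (D x * y + x * D y) m" .
qed

lemma D_cst: "D (cst c) = 0"
  by (rule S_eqI) (simp add: co_D co_cst)

lemma D_cst_mult: "D (cst c * x) = cst c * D x"
  by (simp add: D_mult D_cst)

lemma D_power: "D (x ^ Suc n) = cst (real (Suc n)) * x ^ n * D x"
proof (induction n)
  case 0 then show ?case by (simp add: cst_one)
next
  case (Suc n)
  have "D (x ^ Suc (Suc n)) = D x * x ^ Suc n + x * D (x ^ Suc n)"
    by (simp only: power_Suc[of x "Suc n"] D_mult)
  also have "\<dots> = (1 + cst (real (Suc n))) * x ^ Suc n * D x"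
    by (simp only: Suc) (simp add: algebra_simps)
  also have "1 + cst (real (Suc n)) = cst (real (Suc (Suc n)))"
    by (simp add: cst_add[symmetric] cst_one[symmetric] add.commute)
  finally show ?case .
qed

definition vanish :: "nat \<Rightarrow> S \<Rightarrow> bool" where
  "vanish r x \<longleftrightarrow> (\<forall>m. mdeg m < r \<longrightarrow> co x m = 0)"

lemma vanish_mult:
  assumes "vanish r x" "vanish s y" shows "vanish (r + s) (x * y)"
  unfolding vanish_def
proof (intro allI impI)
  fix m assume m: "mdeg m < r + s"
  have "co (x * y) m = (\<Sum>(a, b)\<in>pairs m. co x a * co y b)" by (rule co_mult)
  also have "\<dots> = 0"
  proof (rule sum.neutral, clarify)
    fix a b assume "(a, b) \<in> pairs m"
    then have "mdeg a + mdeg b < r + s" using m by (auto simp: pairs_def mdeg_add[symmetric])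
    then have "mdeg a < r \<or> mdeg b < s" by linarith
    then show "co x a * co y b = 0" using assms by (auto simp: vanish_def)
  qed
  finally show "co (x * y) m = 0" .
qed

lemma vanish_0[simp]: "vanish 0 x" by (simp add: vanish_def)

lemma vanish_mono: "vanish r x \<Longrightarrow> r' \<le> r \<Longrightarrow> vanish r' x"
  by (auto simp: vanish_def)

lemma vanish_power: "vanish r x \<Longrightarrow> vanish (n * r) (x ^ n)"
  by (induction n) (simp_all add: vanish_mult)

lemma vanish_cst_mult: "vanish r x \<Longrightarrow> vanish r (cst c * x)"
  by (auto simp: vanish_def co_cst_mult)

lemma vanish_prod:
  "finite A \<Longrightarrow> (\<And>i. i \<in> A \<Longrightarrow> vanish (r i) (x i)) \<Longrightarrow> vanish (\<Sum>i\<in>A. r i) (\<Prod>i\<in>A. x i)"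
  by (induction A rule: finite_induct) (simp_all add: vanish_mult)

definition agr :: "nat \<Rightarrow> S \<Rightarrow> S \<Rightarrow> bool" where
  "agr B x y \<longleftrightarrow> (\<forall>m. mdeg m \<le> B \<longrightarrow> co x m = co y m)"

lemma agr_refl[simp]: "agr B x x" by (simp add: agr_def)

lemma agr_mult:
  assumes "agr B x x'" "agr B y y'" shows "agr B (x * y) (x' * y')"
  unfolding agr_def
proof (intro allI impI)
  fix m assume m: "mdeg m \<le> B"
  show "co (x * y) m = co (x' * y') m"
    unfolding co_mult
  proof (rule sum.cong, simp, clarify)
    fix a b assume "(a, b) \<in> pairs m"
    then have "mdeg a \<le> B" "mdeg b \<le> B" using m pairs_mdeg by fastforce+
    then show "co x a * co y b = co x' a * co y' b" using assms by (simp add: agr_def)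
  qed
qed

lemma agr_D: "agr B x y \<Longrightarrow> agr B (D x) (D y)"
  by (simp add: agr_def co_D)

lemma agr_prod_list:
  "(\<And>k. k \<in> set ks \<Longrightarrow> agr B (F k) (G k)) \<Longrightarrow> agr B (prod_list (map F ks)) (prod_list (map G ks))"
  by (induction ks) (simp_all add: agr_mult)

lemma sf_sum_finite:
  assumes "finite J" "\<And>i. i \<in> I \<Longrightarrow> F i m \<noteq> 0 \<Longrightarrow> i \<in> J"
  shows "sf_sum F I m = (\<Sum>i\<in>I \<inter> J. F i m)"
  unfolding sf_sum_def
  by (rule sum.mono_neutral_left) (use assms in auto)

definition lc :: "nat \<Rightarrow> real" where "lc n = (-1) ^ (n + 1) / real n"

definition LnN :: "nat \<Rightarrow> S \<Rightarrow> S" where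
  "LnN N f = (\<Sum>n\<in>{1..N}. cst (lc n) * f ^ n)"

lemma ln1p_trunc:
  assumes f: "vanish 1 f" and m: "mdeg m < N"
  shows "sf_ln1p (co f) m = co (LnN N f) m"
proof -
  have "sf_ln1p (co f) m = (\<Sum>n\<in>{1..} \<inter> {1..N}. sf_scale (lc n) (sf_pow (co f) n) m)"
    unfolding sf_ln1p_def lc_def[symmetric]
  proof (rule sf_sum_finite)
    fix n assume "n \<in> {1::nat..}" and nz: "sf_scale (lc n) (sf_pow (co f) n) m \<noteq> 0"
    have "vanish (n * 1) (f ^ n)" by (rule vanish_power[OF f])
    then have "\<not> mdeg m < n" using nz by (auto simp: vanish_def sf_scale_def co_power[symmetric])
    then have "n \<le> mdeg m" by simp
    then show "n \<in> {1..N}" using \<open>n \<in> {1..}\<close> m by auto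
  qed simp
  also have "{1..} \<inter> {1..N} = {1..N}" by auto
  finally show ?thesis
    by (simp add: LnN_def co_cst_mult sf_scale_def co_power)
qed

lemma LnN_ode: "(1 + f) * D (LnN N f) = D f + cst ((-1) ^ (N + 1)) * f ^ N * D f"
proof (induction N)
  case 0 then show ?case by (simp add: LnN_def D_zero cst_uminus cst_one)
next
  case (Suc N)
  define s :: real where "s = (-1) ^ (N + 1)"
  have LS: "LnN (Suc N) f = LnN N f + cst (lc (Suc N)) * f ^ Suc N"
    by (simp add: LnN_def)
  have "cst (lc (Suc N)) * D (f ^ Suc N) = cst (lc (Suc N) * real (Suc N)) * f ^ N * D f"
    by (simp only: D_power) (simp add: cst_mult mult.assoc)
  also have "lc (Suc N) * real (Suc N) = - s"
    by (simp add: lc_def s_def)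
  finally have DL: "D (LnN (Suc N) f) = D (LnN N f) - cst s * f ^ N * D f"
    by (simp add: LS D_add D_cst_mult cst_uminus)
  have "(1 + f) * D (LnN (Suc N) f) = (1 + f) * D (LnN N f) - (1 + f) * (cst s * f ^ N * D f)"
    unfolding DL by (rule right_diff_distrib)
  also have "\<dots> = D f + cst s * f ^ N * D f - (1 + f) * (cst s * f ^ N * D f)"
    using Suc by (simp add: s_def)
  also have "\<dots> = D f + (- cst s) * f ^ Suc N * D f"
    by (simp add: algebra_simps)
  also have "- cst s = cst ((-1) ^ (Suc N + 1))"
    by (simp add: s_def cst_uminus[symmetric])
  finally show ?case .
qed

lemma ln_ode:
  assumes f: "vanish 1 f"
  shows "co ((1 + f) * D (Ab (sf_ln1p (co f)))) m = co (D f) m"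
proof -
  define N where "N = Suc (mdeg m)"
  have "agr (mdeg m) (Ab (sf_ln1p (co f))) (LnN N f)"
    unfolding agr_def using ln1p_trunc[OF f] by (simp add: N_def)
  then have "agr (mdeg m) ((1 + f) * D (Ab (sf_ln1p (co f)))) ((1 + f) * D (LnN N f))"
    by (intro agr_mult agr_D) simp_all
  then have "co ((1 + f) * D (Ab (sf_ln1p (co f)))) m = co ((1 + f) * D (LnN N f)) m"
    by (simp add: agr_def)
  also have "\<dots> = co (D f) m + co (cst ((-1) ^ (N + 1)) * f ^ N * D f) m"
    by (simp add: LnN_ode)
  also have "co (cst ((-1) ^ (N + 1)) * f ^ N * D f) m = 0"
  proof -
    have "vanish (N * 1 + 0) (cst ((-1) ^ (N + 1)) * f ^ N * D f)"
      unfolding mult.assoc by (intro vanish_cst_mult vanish_mult vanish_power f vanish_0)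
    then show ?thesis by (simp add: vanish_def N_def)
  qed
  finally show ?thesis by simp
qed

lemma ode_unique:
  assumes f: "vanish 1 f"
    and X: "\<And>m. co ((1 + f) * D X) m = co (D f) m"
    and Y: "\<And>m. co ((1 + f) * D Y) m = co (D f) m"
    and X0: "co X 0 = co Y 0"
  shows "X = Y"
proof -
  define Z where "Z = X - Y"
  have Z: "co ((1 + f) * D Z) m = 0" for m
    using X[of m] Y[of m] by (simp add: Z_def D_diff right_diff_distrib)
  have f0: "co f 0 = 0" using f by (simp add: vanish_def)
  have "\<forall>m. mdeg m = n \<longrightarrow> co Z m = 0" for n
  proof (induction n rule: less_induct)
    case (less n)
    show ?case
    proof (intro allI impI)
      fix m assume mn: "mdeg m = n"
      have "co ((1 + f) * D Z) m = (\<Sum>(a, b)\<in>pairs m. co (1 + f) a * co (D Z) b)"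
        by (rule co_mult)
      also have "\<dots> = co (1 + f) 0 * co (D Z) m"
      proof (rule sum_pairs_single)
        fix a b assume ab: "(a, b) \<in> pairs m" "a \<noteq> 0"
        then have "mdeg a > 0" using mdeg_eq_0_iff by auto
        then have "mdeg b < n" using ab mn by (auto simp: pairs_def mdeg_add)
        then have "co Z b = 0" using less by blast
        then show "co (1 + f) a * co (D Z) b = 0" by (simp add: co_D)
      qed
      finally have "real (mdeg m) * co Z m = 0" using Z[of m] f0 by (simp add: co_one co_D)
      moreover have "co Z 0 = 0" using X0 by (simp add: Z_def)
      ultimately show "co Z m = 0" using mdeg_eq_0_iff[of m] by (cases "m = 0") auto
    qed
  qed
  then have "Z = 0" by (intro S_eqI) auto
  then show ?thesis by (simp add: Z_def)
qed

lemma lookup_minus_nat: "Poly_Mapping.lookup (a - b) k = Poly_Mapping.lookup a k - Poly_Mapping.lookup (b::mono) k"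
  by (rule lookup_minus)

definition PB :: "nat \<Rightarrow> S" where "PB K = Ab (pbar K)"

definition MK :: "nat \<Rightarrow> S" where
  "MK K = Ab (\<lambda>m. if m \<noteq> 0 \<and> card (Poly_Mapping.keys m) = 1 \<and> K dvd mdeg m then lc (mdeg m div K) else 0)"

lemma co_PB: "co (PB K) = pbar K" by (simp add: PB_def)

lemma vanish_PB: assumes "K \<ge> 1" shows "vanish K (PB K)"
  unfolding vanish_def
proof (intro allI impI)
  fix m assume m: "mdeg m < K"
  show "co (PB K) m = 0"
  proof (rule ccontr)
    assume "co (PB K) m \<noteq> 0"
    then have nz: "m \<noteq> 0" and good: "\<forall>i. Poly_Mapping.lookup m i = 0 \<or> Poly_Mapping.lookup m i = K"
      by (auto simp: co_PB pbar_def split: if_splits)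
    have "\<exists>i. Poly_Mapping.lookup m i \<noteq> 0"
    proof (rule ccontr)
      assume "\<not> (\<exists>i. Poly_Mapping.lookup m i \<noteq> 0)"
      then have "m = 0" by (intro poly_mapping_eqI) simp
      with nz show False by simp
    qed
    then obtain i :: nat where "Poly_Mapping.lookup m i \<noteq> 0" by blast
    then have "Poly_Mapping.lookup m i = K" using good[rule_format, of i] by auto
    then show False using lookup_le_mdeg[of m i] m by simp
  qed
qed

lemma vanish_PB1: assumes "K \<ge> 1" shows "vanish 1 (PB K)"
  using vanish_PB[OF assms] assms by (rule vanish_mono)

definition good :: "nat \<Rightarrow> mono \<Rightarrow> bool" where
  "good K a \<longleftrightarrow> (\<forall>i. Poly_Mapping.lookup a i = 0 \<or> Poly_Mapping.lookup a i = K)"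

lemma co_1PB: "co (1 + PB K) a = (if good K a then 1 else 0)"
  by (cases "a = 0") (simp_all add: co_one co_PB pbar_def good_def)

lemma keys_one_single:
  fixes b :: mono
  assumes "card (Poly_Mapping.keys b) = 1"
  obtains i where "b = Poly_Mapping.single i (Poly_Mapping.lookup b i)" "Poly_Mapping.lookup b i > 0"
proof -
  from assms obtain i where ki: "Poly_Mapping.keys b = {i}" by (rule card_1_singletonE)
  have "b = Poly_Mapping.single i (Poly_Mapping.lookup b i)"
  proof (rule poly_mapping_eqI)
    fix j show "Poly_Mapping.lookup b j = Poly_Mapping.lookup (Poly_Mapping.single i (Poly_Mapping.lookup b i)) j"
    proof (cases "j = i")
      case True then show ?thesis by simp
    next
      case False
      then have "j \<notin> Poly_Mapping.keys b" using ki by auto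
      then have "Poly_Mapping.lookup b j = 0" by (simp add: in_keys_iff)
      then show ?thesis using False by (simp add: lookup_single)
    qed
  qed
  moreover have "i \<in> Poly_Mapping.keys b" using ki by simp
  then have "Poly_Mapping.lookup b i \<noteq> 0" by (simp add: in_keys_iff)
  then have "Poly_Mapping.lookup b i > 0" by simp
  ultimately show ?thesis by (rule that)
qed

lemma single_eq_0_iff: "Poly_Mapping.single i (t::nat) = 0 \<longleftrightarrow> t = 0"
proof
  assume "Poly_Mapping.single i t = 0"
  then have "Poly_Mapping.lookup (Poly_Mapping.single i t) i = 0" by simp
  then show "t = 0" by simp
qed simp

lemma card_keys_single: "(t::nat) > 0 \<Longrightarrow> card (Poly_Mapping.keys (Poly_Mapping.single i t)) = 1"
  by simp

definition ee :: "nat \<Rightarrow> nat \<Rightarrow> real" where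
  "ee K t = (if K dvd t then real K * (-1) ^ (t div K + 1) else 0)"

lemma co_DMK_single:
  assumes "K \<ge> 1" "t > 0"
  shows "co (D (MK K)) (Poly_Mapping.single i t) = ee K t"
proof (cases "K dvd t")
  case True
  then obtain j where t: "t = K * j" by blast
  with assms have "j > 0" by auto
  then show ?thesis using assms True t by (simp add: co_D MK_def ee_def lc_def single_eq_0_iff)
next
  case False
  then show ?thesis using assms by (simp add: co_D MK_def ee_def)
qed

lemma co_DMK_zero:
  assumes "co (D (MK K)) b \<noteq> 0"
  shows "b \<noteq> 0 \<and> card (Poly_Mapping.keys b) = 1"
proof (rule ccontr)
  assume "\<not> (b \<noteq> 0 \<and> card (Poly_Mapping.keys b) = 1)"
  then have "\<not> (b \<noteq> 0 \<and> card (Poly_Mapping.keys b) = 1 \<and> K dvd mdeg b)" by blast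
  then have "co (D (MK K)) b = 0" unfolding co_D MK_def co_Ab if_not_P[OF \<open>\<not> (b \<noteq> 0 \<and> card (Poly_Mapping.keys b) = 1 \<and> K dvd mdeg b)\<close>] by simp
  with assms show False by simp
qed

lemma number_lemma:
  assumes K: "K \<ge> 1" and r: "r \<noteq> 0" "r \<noteq> K"
  shows "(\<Sum>t\<in>{1..r}. (if r - t = 0 \<or> r - t = K then ee K t else 0)) = 0"
proof (cases "K dvd r")
  case False
  show ?thesis
  proof (rule sum.neutral, intro ballI)
    fix t assume t: "t \<in> {1..r}"
    show "(if r - t = 0 \<or> r - t = K then ee K t else 0) = 0"
    proof (cases "r - t = 0 \<or> r - t = K")
      case True
      then have "r = t \<or> r = t + K" using t by auto
      then have "\<not> K dvd t" using False by auto
      then show ?thesis by (simp add: ee_def)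
    qed simp
  qed
next
  case True
  then obtain j where rj: "r = K * j" by blast
  with r K have j: "j \<ge> 2" by (cases j; cases "j - 1"; auto)
  let ?h = "\<lambda>t. (if r - t = 0 \<or> r - t = K then ee K t else 0)"
  have "(\<Sum>t\<in>{1..r}. ?h t) = (\<Sum>t\<in>{K * (j - 1), K * j}. ?h t)"
  proof (rule sum.mono_neutral_right)
    show "{K * (j - 1), K * j} \<subseteq> {1..r}" using j K rj by (auto simp: nat_mult_le_cancel1)
    show "\<forall>t\<in>{1..r} - {K * (j - 1), K * j}. ?h t = 0"
    proof
      fix t assume t: "t \<in> {1..r} - {K * (j - 1), K * j}"
      have "r - t \<noteq> 0" using t rj by auto
      moreover have "r - t \<noteq> K"
      proof
        assume "r - t = K"
        then have "t = K * j - K" using rj t by auto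
        also have "\<dots> = K * (j - 1)" by (simp add: right_diff_distrib')
        finally show False using t by auto
      qed
      ultimately show "?h t = 0" by simp
    qed
  qed simp
  also have "\<dots> = ?h (K * (j - 1)) + ?h (K * j)"
    using K j by (subst sum.insert) auto
  also have "?h (K * j) = real K * (-1) ^ (j + 1)" using rj K by (simp add: ee_def)
  also have "?h (K * (j - 1)) = real K * (-1) ^ j"
  proof -
    have "r - K * (j - 1) = K" using rj j by (simp add: right_diff_distrib' mult.commute)
    moreover have "K * (j - 1) div K = j - 1" using K by simp
    moreover have "(-1::real) ^ (j - 1 + 1) = (-1) ^ j" using j by simp
    ultimately show ?thesis by (simp add: ee_def)
  qed
  finally show ?thesis by simp
qed

lemma lk_ms: "Poly_Mapping.lookup (m - Poly_Mapping.single i t) j =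
   (if j = i then Poly_Mapping.lookup m i - t else Poly_Mapping.lookup (m::mono) j)"
  by (simp add: lookup_minus lookup_single)

lemma good_ms: "good K (m - Poly_Mapping.single i t) \<longleftrightarrow>
  (\<forall>j. j \<noteq> i \<longrightarrow> Poly_Mapping.lookup m j = 0 \<or> Poly_Mapping.lookup m j = K) \<and>
  (Poly_Mapping.lookup m i - t = 0 \<or> Poly_Mapping.lookup m i - t = K)"
  unfolding good_def lk_ms by auto

lemma MK_sum_reindex:
  assumes K: "K \<ge> 1"
  shows "co ((1 + PB K) * D (MK K)) m =
    (\<Sum>i\<in>Poly_Mapping.keys m. \<Sum>t\<in>{1..Poly_Mapping.lookup m i}.
        (if good K (m - Poly_Mapping.single i t) then ee K t else 0))"
proof -
  define Q where "Q = Sigma (Poly_Mapping.keys m) (\<lambda>i. {1..Poly_Mapping.lookup m i})"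
  define \<phi> where "\<phi> = (\<lambda>(i, t). (m - Poly_Mapping.single i t, Poly_Mapping.single i (t::nat)))"
  define h where "h = (\<lambda>(a, b). co (1 + PB K) a * co (D (MK K)) b)"
  have fQ: "finite Q" by (simp add: Q_def)
  have sub: "\<phi> ` Q \<subseteq> pairs m"
  proof
    fix p assume "p \<in> \<phi> ` Q"
    then obtain i t where it: "i \<in> Poly_Mapping.keys m" "1 \<le> t" "t \<le> Poly_Mapping.lookup m i"
      and p: "p = (m - Poly_Mapping.single i t, Poly_Mapping.single i t)"
      by (auto simp: Q_def \<phi>_def)
    have "m - Poly_Mapping.single i t + Poly_Mapping.single i t = m"
      by (rule poly_mapping_eqI) (use it in \<open>auto simp: lookup_add lk_ms lookup_single\<close>)
    then show "p \<in> pairs m" by (simp add: p pairs_def)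
  qed
  have "co ((1 + PB K) * D (MK K)) m = sum h (pairs m)"
    by (simp add: co_mult h_def)
  also have "\<dots> = sum h (\<phi> ` Q)"
  proof (rule sum.mono_neutral_right[OF finite_pairs sub], rule ballI)
    fix p assume p: "p \<in> pairs m - \<phi> ` Q"
    obtain a b where ab: "p = (a, b)" by force
    show "h p = 0"
    proof (rule ccontr)
      assume "h p \<noteq> 0"
      then have "co (D (MK K)) b \<noteq> 0" by (simp add: h_def ab)
      then have cb: "card (Poly_Mapping.keys b) = 1" using co_DMK_zero by blast
      obtain i where bi: "b = Poly_Mapping.single i (Poly_Mapping.lookup b i)" "Poly_Mapping.lookup b i > 0"
        using keys_one_single[OF cb] by blast
      define t where "t = Poly_Mapping.lookup b i"
      have abm: "a + b = m" using p ab by (simp add: pairs_def)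
      have "Poly_Mapping.lookup m i = Poly_Mapping.lookup a i + t"
        unfolding abm[symmetric] t_def by (simp add: lookup_add)
      then have tm: "t \<le> Poly_Mapping.lookup m i" "Poly_Mapping.lookup m i \<noteq> 0" using bi(2) t_def by auto
      then have "i \<in> Poly_Mapping.keys m" by (simp add: in_keys_iff)
      then have "(i, t) \<in> Q" using tm bi(2) t_def by (auto simp: Q_def)
      moreover have "a = m - b" using abm by auto
      ultimately have "p \<in> \<phi> ` Q" using ab bi t_def by (auto simp: \<phi>_def image_iff intro!: bexI[of _ "(i, t)"])
      then show False using p by blast
    qed
  qed
  also have "\<dots> = sum (h \<circ> \<phi>) Q"
  proof (rule sum.reindex, rule inj_onI)
    fix x y assume "x \<in> Q" "y \<in> Q" "\<phi> x = \<phi> y"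
    moreover obtain i t where x: "x = (i, t)" by force
    moreover obtain i' t' where y: "y = (i', t')" by force
    ultimately have e: "Poly_Mapping.single i t = Poly_Mapping.single i' t'" "t > 0"
      by (auto simp: \<phi>_def Q_def)
    then have "Poly_Mapping.lookup (Poly_Mapping.single i t) i = Poly_Mapping.lookup (Poly_Mapping.single i' t') i"
      by simp
    then have h: "t = (t' when i' = i)" by (simp add: lookup_single)
    then have "i = i'" using e(2) by (auto simp: when_def split: if_splits)
    moreover then have "t = t'" using h by simp
    ultimately show "x = y" using x y by simp
  qed
  also have "\<dots> = (\<Sum>i\<in>Poly_Mapping.keys m. \<Sum>t\<in>{1..Poly_Mapping.lookup m i}.
        (if good K (m - Poly_Mapping.single i t) then ee K t else 0))"
  proof -
    have "sum (h \<circ> \<phi>) Q = (\<Sum>i\<in>Poly_Mapping.keys m. \<Sum>t\<in>{1..Poly_Mapping.lookup m i}. (h \<circ> \<phi>) (i, t))"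
      unfolding Q_def by (rule sum.Sigma[where g="\<lambda>i t. (h \<circ> \<phi>) (i, t)", unfolded case_prod_eta, symmetric]) auto
    also have "\<dots> = (\<Sum>i\<in>Poly_Mapping.keys m. \<Sum>t\<in>{1..Poly_Mapping.lookup m i}.
        (if good K (m - Poly_Mapping.single i t) then ee K t else 0))"
    proof (rule sum.cong[OF refl], rule sum.cong[OF refl])
      fix i t assume "t \<in> {1..Poly_Mapping.lookup m i}"
      then have "t > 0" by auto
      then show "(h \<circ> \<phi>) (i, t) = (if good K (m - Poly_Mapping.single i t) then ee K t else 0)"
        by (simp add: h_def \<phi>_def co_1PB co_DMK_single[OF K] del: co_add)
    qed
    finally show ?thesis .
  qed
  finally show ?thesis .
qed

lemma MK_ode:
  assumes K: "K \<ge> 1"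
  shows "co ((1 + PB K) * D (MK K)) m = co (D (PB K)) m"
proof (cases "good K m")
  case True
  have inner: "(\<Sum>t\<in>{1..Poly_Mapping.lookup m i}. (if good K (m - Poly_Mapping.single i t) then ee K t else 0)) = real K"
    if i: "i \<in> Poly_Mapping.keys m" for i
  proof -
    have "Poly_Mapping.lookup m i \<noteq> 0" using i by (simp add: in_keys_iff)
    then have mi: "Poly_Mapping.lookup m i = K" using True[unfolded good_def, rule_format, of i] by auto
    have "(\<Sum>t\<in>{1..Poly_Mapping.lookup m i}. (if good K (m - Poly_Mapping.single i t) then ee K t else 0))
        = (\<Sum>t\<in>{1..K}. (if t = K then real K else 0))"
    proof (rule sum.cong)
      fix t assume t: "t \<in> {1..K}"
      have "good K (m - Poly_Mapping.single i t) \<longleftrightarrow> t = K"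
        using True t mi unfolding good_ms by (auto simp: good_def)
      moreover have "ee K K = real K" using K by (simp add: ee_def)
      ultimately show "(if good K (m - Poly_Mapping.single i t) then ee K t else 0) = (if t = K then real K else 0)"
        by auto
    qed (simp add: mi)
    also have "\<dots> = real K" using K by simp
    finally show ?thesis .
  qed
  have "co ((1 + PB K) * D (MK K)) m = (\<Sum>i\<in>Poly_Mapping.keys m. real K)"
    unfolding MK_sum_reindex[OF K] by (rule sum.cong[OF refl inner])
  also have "\<dots> = real (mdeg m)"
  proof -
    have "mdeg m = (\<Sum>i\<in>Poly_Mapping.keys m. K)"
      unfolding mdeg_def
    proof (rule sum.cong)
      fix i assume "i \<in> Poly_Mapping.keys m"
      then have "Poly_Mapping.lookup m i \<noteq> 0" by (simp add: in_keys_iff)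
      then show "Poly_Mapping.lookup m i = K" using True[unfolded good_def, rule_format, of i] by auto
    qed simp
    then show ?thesis by simp
  qed
  also have "\<dots> = co (D (PB K)) m"
  proof (cases "m = 0")
    case True then show ?thesis by (simp add: co_D)
  next
    case False then show ?thesis using \<open>good K m\<close> by (simp add: co_D co_PB pbar_def good_def)
  qed
  finally show ?thesis .
next
  case False
  then obtain i0 where i0: "Poly_Mapping.lookup m i0 \<noteq> 0" "Poly_Mapping.lookup m i0 \<noteq> K"
    by (auto simp: good_def)
  have inner: "(\<Sum>t\<in>{1..Poly_Mapping.lookup m i}. (if good K (m - Poly_Mapping.single i t) then ee K t else 0)) = 0"
    for i
  proof (cases "\<forall>j. j \<noteq> i \<longrightarrow> Poly_Mapping.lookup m j = 0 \<or> Poly_Mapping.lookup m j = K")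
    case True
    then have "i = i0" using True[rule_format, of i0] i0 by auto
    have "(\<Sum>t\<in>{1..Poly_Mapping.lookup m i}. (if good K (m - Poly_Mapping.single i t) then ee K t else 0))
      = (\<Sum>t\<in>{1..Poly_Mapping.lookup m i}. (if Poly_Mapping.lookup m i - t = 0 \<or> Poly_Mapping.lookup m i - t = K then ee K t else 0))"
      using True by (simp add: good_ms)
    also have "\<dots> = 0" using number_lemma[OF K] i0 \<open>i = i0\<close> by simp
    finally show ?thesis .
  next
    case False
    then have ng: "\<And>t. \<not> good K (m - Poly_Mapping.single i t)" unfolding good_ms by blast
    show ?thesis by (simp add: ng)
  qed
  have "co ((1 + PB K) * D (MK K)) m = 0"
    unfolding MK_sum_reindex[OF K] inner by simp
  also have "\<dots> = co (D (PB K)) m"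
  proof -
    have "\<not> (\<forall>i. Poly_Mapping.lookup m i = 0 \<or> Poly_Mapping.lookup m i = K)"
      using False by (simp add: good_def)
    then have "pbar K m = 0" by (simp add: pbar_def)
    then show ?thesis by (simp add: co_D co_PB)
  qed
  finally show ?thesis .
qed

lemma ln_pbar:
  assumes K: "K \<ge> 1"
  shows "sf_ln1p (pbar K) = co (MK K)"
proof -
  have f: "vanish 1 (PB K)" by (rule vanish_PB1[OF K])
  have "Ab (sf_ln1p (co (PB K))) = MK K"
  proof (rule ode_unique[OF f])
    show "co ((1 + PB K) * D (Ab (sf_ln1p (co (PB K))))) m = co (D (PB K)) m" for m
      by (rule ln_ode[OF f])
    show "co ((1 + PB K) * D (MK K)) m = co (D (PB K)) m" for m
      by (rule MK_ode[OF K])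
    have "sf_ln1p (co (PB K)) 0 = co (LnN 1 (PB K)) 0"
      by (rule ln1p_trunc[OF f]) simp
    also have "\<dots> = 0" using f by (simp add: LnN_def co_cst_mult vanish_def)
    finally show "co (Ab (sf_ln1p (co (PB K)))) 0 = co (MK K) 0"
      by (simp add: MK_def)
  qed
  then have "co (Ab (sf_ln1p (co (PB K)))) = co (MK K)" by simp
  then show ?thesis by (simp add: co_PB)
qed

lemma moebius_1: "moebius 1 = 1" by (simp add: moebius_def)
lemma moebius_Suc0[simp]: "moebius (Suc 0) = 1" by (simp add: moebius_def)
lemma muhat_Suc0[simp]: "muhat (Suc 0) = 1" by (simp add: muhat_def)

lemma moebius_prime_mult:
  fixes p e :: nat
  assumes p: "prime p" and nd: "\<not> p dvd e" and e: "e > 0"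
  shows "moebius (p * e) = - moebius e"
proof -
  have cop: "coprime p e" using p nd by (simp add: prime_imp_coprime)
  have sq: "squarefree (p * e) \<longleftrightarrow> squarefree e"
    using squarefree_multD(2)[of p e] squarefree_mult_coprime[OF cop squarefree_prime[OF p]] by blast
  have pf: "prime_factors (p * e) = insert p (prime_factors e)"
    using p e by (simp add: prime_factors_product prime_prime_factors prime_gt_0_nat[THEN less_imp_neq, symmetric])
  have "p \<notin> prime_factors e" using nd by auto
  then have "card (prime_factors (p * e)) = Suc (card (prime_factors e))"
    by (simp add: pf)
  moreover have "p * e \<noteq> 0" using p e by (simp add: prime_gt_0_nat)
  ultimately show ?thesis using e sq by (simp add: moebius_def)
qed

lemma moebius_sq:
  fixes p n :: nat
  assumes p: "prime p" and d: "p ^ 2 dvd n"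
  shows "moebius n = 0"
proof -
  have "\<not> squarefree n" using p d unfolding squarefree_def by auto
  then show ?thesis by (simp add: moebius_def)
qed

lemma muhat_pow2: "muhat (2 ^ b) = (if b = 0 then 1 else 2 ^ (b - 1))"
proof (cases "b = 0")
  case True then show ?thesis by (simp add: muhat_def moebius_1)
next
  case False
  have "multiplicity (2::nat) (2 ^ b) = b" by (simp add: multiplicity_same_power)
  then show ?thesis using False by (simp add: muhat_def moebius_1)
qed

lemma odd_prime_mult2:
  fixes p :: nat
  assumes "prime p" "odd p" "d > 0"
  shows "multiplicity 2 (p * d) = multiplicity 2 d"
proof -
  have "multiplicity 2 (p * d) = multiplicity 2 p + multiplicity 2 d"
    using assms by (intro prime_elem_multiplicity_mult_distrib) (auto simp: prime_gt_0_nat)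
  moreover have "multiplicity (2::nat) p = 0" using assms by (intro not_dvd_imp_multiplicity_0) simp
  ultimately show ?thesis by simp
qed

lemma muhat_prime_mult:
  fixes p d :: nat
  assumes p: "prime p" "odd p" and nd: "\<not> p dvd d" and d: "d > 0"
  shows "muhat (p * d) = - muhat d"
proof (cases "odd d")
  case True
  then show ?thesis using p nd d by (simp add: muhat_def moebius_prime_mult)
next
  case False
  define v where "v = multiplicity (2::nat) d"
  have v: "multiplicity 2 (p * d) = v" using odd_prime_mult2[OF p d] by (simp add: v_def)
  have dv: "2 ^ v dvd d" unfolding v_def by (rule multiplicity_dvd)
  then obtain e where de: "d = 2 ^ v * e" by blast
  have e: "e > 0" using d de by simp
  have "p * d div 2 ^ v = p * e" using de by simp
  moreover have "d div 2 ^ v = e" using de by simp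
  moreover have "\<not> p dvd e" using nd de by auto
  ultimately show ?thesis using False p v
    by (simp add: muhat_def moebius_prime_mult[OF p(1) _ e] v_def[symmetric])
qed

lemma muhat_sq:
  fixes p d :: nat
  assumes p: "prime p" "odd p" and sq: "p ^ 2 dvd d" and d: "d > 0"
  shows "muhat d = 0"
proof (cases "odd d")
  case True
  then show ?thesis using moebius_sq[OF p(1) sq] by (simp add: muhat_def)
next
  case False
  define v where "v = multiplicity (2::nat) d"
  have dv: "2 ^ v dvd d" unfolding v_def by (rule multiplicity_dvd)
  then obtain e where de: "d = 2 ^ v * e" by blast
  have "coprime (p ^ 2) (2 ^ v)"
    using p by (metis coprime_power_left_iff coprime_power_right_iff prime_imp_coprime two_is_prime_nat primes_dvd_imp_eq
       even_iff_mod_2_eq_zero dvd_refl prime_nat_iff)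
  then have "p ^ 2 dvd e" using sq de by (simp add: coprime_dvd_mult_right_iff)
  then have "moebius e = 0" by (rule moebius_sq[OF p(1)])
  moreover have "d div 2 ^ v = e" using de d by simp
  ultimately show ?thesis using False by (simp add: muhat_def v_def)
qed

lemma sum_muhat_pow2: "a \<ge> 1 \<Longrightarrow> (\<Sum>b<a. muhat (2 ^ b)) = 2 ^ (a - 1)"
proof (induction a rule: nat_induct_at_least)
  case base then show ?case by (simp add: muhat_pow2)
next
  case (Suc n)
  then show ?case by (cases n) (simp_all add: muhat_pow2)
qed

definition hh :: "nat \<Rightarrow> nat \<Rightarrow> real" where
  "hh N d = muhat d * (-1) ^ (N div d + 1)"

lemma odd_factor_case:
  fixes N p :: nat
  assumes N: "N > 0" and p: "prime p" "odd p" "p dvd N"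
  shows "(\<Sum>d\<in>{d. d dvd N}. hh N d) = 0"
proof -
  define A where "A = {d. d dvd N \<and> \<not> p dvd d}"
  define B where "B = (\<lambda>d. p * d) ` A"
  have p0: "p > 0" using p by (simp add: prime_gt_0_nat)
  have fin: "finite {d. d dvd N}" using N by simp
  have AB: "A \<union> B \<subseteq> {d. d dvd N}"
  proof
    fix x assume "x \<in> A \<union> B"
    then show "x \<in> {d. d dvd N}"
    proof
      assume "x \<in> A" then show ?thesis by (simp add: A_def)
    next
      assume "x \<in> B"
      then obtain e where e: "e \<in> A" "x = p * e" by (auto simp: B_def)
      have "coprime p e" using e p by (simp add: A_def prime_imp_coprime)
      then have "p * e dvd N" using e p by (intro divides_mult) (auto simp: A_def)
      then show ?thesis using e by simp
    qed
  qed
  have "(\<Sum>d\<in>{d. d dvd N}. hh N d) = (\<Sum>d\<in>A \<union> B. hh N d)"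
  proof (rule sum.mono_neutral_right[OF fin AB], rule ballI)
    fix d assume d: "d \<in> {d. d dvd N} - (A \<union> B)"
    then have dN: "d dvd N" and pd: "p dvd d" by (auto simp: A_def)
    then obtain e where de: "d = p * e" by blast
    have "p dvd e"
    proof (rule ccontr)
      assume "\<not> p dvd e"
      moreover have "e dvd N" using dN de by (metis dvd_mult_right)
      ultimately have "d \<in> B" using de by (auto simp: A_def B_def)
      then show False using d by blast
    qed
    then have "p ^ 2 dvd d" using de by (auto simp: power2_eq_square)
    moreover have "d > 0" using dN N by (auto intro: Nat.gr0I)
    ultimately show "hh N d = 0" using muhat_sq[OF p(1,2)] by (simp add: hh_def)
  qed
  also have "\<dots> = (\<Sum>d\<in>A. hh N d) + (\<Sum>d\<in>B. hh N d)"
  proof (rule sum.union_disjoint)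
    show "finite A" using fin by (rule finite_subset[rotated]) (auto simp: A_def)
    then show "finite B" by (simp add: B_def)
    show "A \<inter> B = {}" by (auto simp: A_def B_def)
  qed
  also have "(\<Sum>d\<in>B. hh N d) = (\<Sum>d\<in>A. hh N (p * d))"
    unfolding B_def using p0 by (subst sum.reindex) (auto simp: inj_on_def)
  also have "(\<Sum>d\<in>A. hh N (p * d)) = (\<Sum>d\<in>A. - hh N d)"
  proof (rule sum.cong[OF refl])
    fix e assume e: "e \<in> A"
    have "coprime p e" using e p by (simp add: A_def prime_imp_coprime)
    then have "p * e dvd N" using e p by (intro divides_mult) (auto simp: A_def)
    then obtain k where k: "N = p * e * k" by blast
    have e0: "e > 0" using k N by (auto intro: Nat.gr0I)
    have "N div (p * e) = k" using k p0 e0 by simp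
    moreover have "N div e = p * k" using k e0 by simp
    moreover have "(-1::real) ^ (p * k + 1) = (-1) ^ (k + 1)"
    proof -
      have "(-1::real) ^ (p * k) = ((-1) ^ p) ^ k" by (simp add: power_mult)
      also have "\<dots> = (-1) ^ k" using p(2) by simp
      finally show ?thesis by simp
    qed
    moreover have "muhat (p * e) = - muhat e"
      using e e0 p by (intro muhat_prime_mult) (auto simp: A_def)
    ultimately show "hh N (p * e) = - hh N e" by (simp add: hh_def)
  qed
  finally show ?thesis by (simp add: sum_negf)
qed

lemma pow2_case:
  "(\<Sum>d\<in>{d. d dvd (2::nat) ^ a}. hh (2 ^ a) d) = (if a = 0 then 1 else 0)"
proof -
  have eq: "{d. d dvd (2::nat) ^ a} = (\<lambda>b. 2 ^ b) ` {..a}"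
    by (auto simp: divides_primepow_nat)
  have "(\<Sum>d\<in>{d. d dvd (2::nat) ^ a}. hh (2 ^ a) d) = (\<Sum>b\<in>{..a}. hh (2 ^ a) (2 ^ b))"
    unfolding eq by (subst sum.reindex) (auto simp: inj_on_def)
  also have "\<dots> = (\<Sum>b<a. hh (2 ^ a) (2 ^ b)) + hh (2 ^ a) (2 ^ a)"
    by (simp add: lessThan_Suc_atMost[symmetric])
  also have "(\<Sum>b<a. hh (2 ^ a) (2 ^ b)) = (\<Sum>b<a. - muhat (2 ^ b))"
  proof (rule sum.cong[OF refl])
    fix b assume "b \<in> {..<a}"
    then have "(2::nat) ^ a div 2 ^ b = 2 ^ (a - b)" "a - b > 0"
      by (auto simp: power_diff)
    then show "hh (2 ^ a) (2 ^ b) = - muhat (2 ^ b)" by (simp add: hh_def)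
  qed
  finally have main: "(\<Sum>d\<in>{d. d dvd (2::nat) ^ a}. hh (2 ^ a) d) = (\<Sum>b<a. - muhat (2 ^ b)) + hh (2 ^ a) (2 ^ a)" .
  show ?thesis
  proof (cases "a = 0")
    case False
    then have "(\<Sum>b<a. muhat (2 ^ b)) = 2 ^ (a - 1)" by (intro sum_muhat_pow2) simp
    then show ?thesis using False main by (simp add: sum_negf hh_def muhat_pow2)
  qed (simp add: main hh_def muhat_pow2)
qed

lemma two_decomp: "(N::nat) > 0 \<Longrightarrow> \<exists>a q. N = 2 ^ a * q \<and> odd q"
proof (induction N rule: less_induct)
  case (less N)
  show ?case
  proof (cases "even N")
    case True
    then obtain M where M: "N = 2 * M" by blast
    then have "M < N" "M > 0" using less.prems by auto
    then obtain a q where "M = 2 ^ a * q" "odd q" using less.IH by blast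
    then have "N = 2 ^ Suc a * q" using M by simp
    then show ?thesis using \<open>odd q\<close> by blast
  next
    case False
    then have "N = 2 ^ 0 * N" by simp
    then show ?thesis using False by blast
  qed
qed

lemma muhat_divisor_sum:
  assumes N: "(N::nat) > 0"
  shows "(\<Sum>d\<in>{d. d dvd N}. muhat d * (-1) ^ (N div d + 1)) = (if N = 1 then 1 else 0)"
proof -
  obtain a q where aq: "N = 2 ^ a * q" "odd q" using two_decomp[OF N] by blast
  show ?thesis
  proof (cases "q = 1")
    case True
    then show ?thesis using pow2_case[of a] aq by (simp add: hh_def)
  next
    case False
    then obtain p where p: "prime p" "p dvd q" using prime_factor_nat by blast
    then have "odd p" using aq(2) by (auto elim: dvd_trans[rotated])
    moreover have "p dvd N" using p aq by simp
    ultimately have "(\<Sum>d\<in>{d. d dvd N}. hh N d) = 0" using odd_factor_case[OF N p(1)] by blast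
    moreover have "N \<noteq> 1" using aq False by auto
    ultimately show ?thesis by (simp add: hh_def)
  qed
qed

lemma single_eq_iff_nat:
  assumes "j > 0"
  shows "Poly_Mapping.single i j = Poly_Mapping.single i' (k::nat) \<longleftrightarrow> i = i' \<and> j = k"
proof
  assume e: "Poly_Mapping.single i j = Poly_Mapping.single i' k"
  then have "Poly_Mapping.lookup (Poly_Mapping.single i j) i = Poly_Mapping.lookup (Poly_Mapping.single i' k) i"
    by simp
  then have h: "j = (k when i' = i)" by (simp add: lookup_single)
  then have "i = i'" using assms by (auto simp: when_def split: if_splits)
  then show "i = i' \<and> j = k" using h by simp
qed simp

lemma part1_coeff:
  assumes k: "k \<ge> 1"
  shows "psum k m = sf_sum (\<lambda>d. sf_scale (muhat d / real d) (sf_ln1p (pbar (d * k)))) {1..} m"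
proof -
  let ?F = "\<lambda>d. sf_scale (muhat d / real d) (sf_ln1p (pbar (d * k)))"
  have lnM: "sf_ln1p (pbar (d * k)) = co (MK (d * k))" if "d \<in> {1..}" for d
    using that k by (intro ln_pbar) simp
  have "sf_sum ?F {1..} m = (\<Sum>d\<in>{1..} \<inter> {1..mdeg m}. ?F d m)"
  proof (rule sf_sum_finite)
    fix d assume d: "d \<in> {1::nat..}" and nz: "?F d m \<noteq> 0"
    then have "co (MK (d * k)) m \<noteq> 0" using lnM[OF d] by (auto simp: sf_scale_def)
    then have "m \<noteq> 0" "d * k dvd mdeg m" by (auto simp: MK_def split: if_splits)
    then have "d * k \<le> mdeg m" using mdeg_eq_0_iff[of m] by (auto intro: dvd_imp_le)
    then have "d \<le> mdeg m" using k by (metis le_trans mult_le_mono2 mult.right_neutral)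
    then show "d \<in> {1..mdeg m}" using d by simp
  qed simp
  also have "{1..} \<inter> {1..mdeg m} = {1..mdeg m}" by auto
  also have "(\<Sum>d\<in>{1..mdeg m}. ?F d m) = (\<Sum>d\<in>{1..mdeg m}. muhat d / real d * co (MK (d * k)) m)"
    by (rule sum.cong[OF refl]) (simp add: sf_scale_def lnM)
  finally have R: "sf_sum ?F {1..} m = (\<Sum>d\<in>{1..mdeg m}. muhat d / real d * co (MK (d * k)) m)" .
  show ?thesis
  proof (cases "m \<noteq> 0 \<and> card (Poly_Mapping.keys m) = 1")
    case False
    then have z: "co (MK (d * k)) m = 0" for d by (auto simp: MK_def)
    have "psum k m = 0"
    proof (rule ccontr)
      assume "psum k m \<noteq> 0"
      then obtain i where "m = Poly_Mapping.single i k" by (auto simp: psum_def split: if_splits)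
      then show False using False k by (simp add: single_eq_0_iff)
    qed
    then show ?thesis using R z by simp
  next
    case True
    then obtain i where mi: "m = Poly_Mapping.single i (Poly_Mapping.lookup m i)" "Poly_Mapping.lookup m i > 0"
      using keys_one_single by blast
    define j where "j = Poly_Mapping.lookup m i"
    have mj: "m = Poly_Mapping.single i j" "j > 0" using mi j_def by auto
    have dm: "mdeg m = j" using mj by simp
    have ex: "(\<exists>i'. m = Poly_Mapping.single i' k) \<longleftrightarrow> j = k"
    proof
      assume "\<exists>i'. m = Poly_Mapping.single i' k"
      then obtain i' where "Poly_Mapping.single i j = Poly_Mapping.single i' k" using mj by auto
      then show "j = k" unfolding single_eq_iff_nat[OF mj(2), of i i' k] by simp
    next
      assume "j = k" then show "\<exists>i'. m = Poly_Mapping.single i' k" using mj by blast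
    qed
    have ps: "psum k m = (if j = k then 1 else 0)"
      unfolding psum_def ex by simp
    have coM: "co (MK (d * k)) m = (if d * k dvd j then lc (j div (d * k)) else 0)" for d
      using True dm by (simp add: MK_def)
    show ?thesis
    proof (cases "k dvd j")
      case False
      then have "\<not> d * k dvd j" for d using dvd_mult_right[of d k j] by blast
      moreover have "j \<noteq> k" using False by auto
      ultimately show ?thesis using R ps coM by simp
    next
      case True
      then obtain N where jN: "j = k * N" by blast
      have N: "N > 0" using jN mj(2) by simp
      have "(\<Sum>d\<in>{1..mdeg m}. muhat d / real d * co (MK (d * k)) m)
          = (\<Sum>d\<in>{1..mdeg m}. if d dvd N then muhat d / real d * lc (N div d) else 0)"
      proof (rule sum.cong[OF refl])
        fix d :: nat
        have "d * k dvd k * N \<longleftrightarrow> d dvd N" using k by (simp add: mult.commute)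
        moreover have "k * N div (d * k) = N div d" using k by (simp add: mult.commute)
        ultimately show "muhat d / real d * co (MK (d * k)) m = (if d dvd N then muhat d / real d * lc (N div d) else 0)"
          using coM[of d] jN by simp
      qed
      also have "\<dots> = (\<Sum>d\<in>{1..mdeg m} \<inter> {d. d dvd N}. muhat d / real d * lc (N div d))"
        by (subst sum.inter_restrict) simp_all
      also have "{1..mdeg m} \<inter> {d. d dvd N} = {d. d dvd N}"
      proof -
        have "N \<le> mdeg m" using dm jN k by simp
        moreover have "x \<in> {1..mdeg m}" if "x dvd N" for x
        proof -
          have "x \<le> N" using that N by (rule dvd_imp_le)
          moreover have "x \<noteq> 0" using that N by auto
          ultimately show ?thesis using \<open>N \<le> mdeg m\<close> by simp
        qed
        ultimately show ?thesis by auto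
      qed
      also have "(\<Sum>d\<in>{d. d dvd N}. muhat d / real d * lc (N div d))
          = (\<Sum>d\<in>{d. d dvd N}. muhat d * (-1) ^ (N div d + 1)) / real N"
        unfolding sum_divide_distrib
      proof (rule sum.cong[OF refl])
        fix d assume "d \<in> {d. d dvd N}"
        then obtain e where e: "N = d * e" by auto
        then have "d > 0" "e > 0" using N by auto
        then show "muhat d / real d * lc (N div d) = muhat d * (-1) ^ (N div d + 1) / real N"
          using e by (simp add: lc_def)
      qed
      also have "\<dots> = (if N = 1 then 1 else 0)" using muhat_divisor_sum[OF N] by simp
      finally show ?thesis using R ps jN k by simp
    qed
  qed
qed

lemma part1:
  assumes "k \<ge> 1"
  shows "psum k = sf_sum (\<lambda>d. sf_scale (muhat d / real d) (sf_ln1p (pbar (d * k)))) {1..}"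
  using part1_coeff[OF assms] by (intro ext) simp

definition PS :: "nat \<Rightarrow> S" where "PS k = Ab (psum k)"

definition ww :: "nat \<Rightarrow> nat \<Rightarrow> real" where
  "ww d n = muhat d * (-1) ^ (n + 1) / (real d * real n)"

definition TT :: "nat \<Rightarrow> nat \<Rightarrow> S" where
  "TT B k = (\<Sum>p\<in>{1..B} \<times> {1..B}. cst (ww (fst p) (snd p)) * PB (fst p * k) ^ (snd p))"

lemma ln1p_trunc2:
  assumes f: "vanish 1 f" and m: "mdeg m \<le> B"
  shows "sf_ln1p (co f) m = (\<Sum>n\<in>{1..B}. lc n * co (f ^ n) m)"
proof -
  have "sf_ln1p (co f) m = (\<Sum>n\<in>{1..} \<inter> {1..B}. sf_scale (lc n) (sf_pow (co f) n) m)"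
    unfolding sf_ln1p_def lc_def[symmetric]
  proof (rule sf_sum_finite)
    fix n assume "n \<in> {1::nat..}" and nz: "sf_scale (lc n) (sf_pow (co f) n) m \<noteq> 0"
    have "vanish (n * 1) (f ^ n)" by (rule vanish_power[OF f])
    then have "\<not> mdeg m < n" using nz by (auto simp: vanish_def sf_scale_def co_power[symmetric])
    then show "n \<in> {1..B}" using \<open>n \<in> {1..}\<close> m by auto
  qed simp
  also have "{1..} \<inter> {1..B} = {1..B}" by auto
  finally show ?thesis by (simp add: sf_scale_def co_power)
qed

lemma agr_PS_TT:
  assumes k: "k \<ge> 1"
  shows "agr B (PS k) (TT B k)"
  unfolding agr_def
proof (intro allI impI)
  fix m assume mB: "mdeg m \<le> B"
  let ?F = "\<lambda>d. sf_scale (muhat d / real d) (sf_ln1p (pbar (d * k)))"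
  have lnM: "sf_ln1p (pbar (d * k)) = co (MK (d * k))" if "d \<ge> 1" for d
    using that k by (intro ln_pbar) simp
  have "co (PS k) m = sf_sum ?F {1..} m" by (simp add: PS_def part1[OF k])
  also have "\<dots> = (\<Sum>d\<in>{1..} \<inter> {1..B}. ?F d m)"
  proof (rule sf_sum_finite)
    fix d assume d: "d \<in> {1::nat..}" and nz: "?F d m \<noteq> 0"
    then have "co (MK (d * k)) m \<noteq> 0" using lnM[of d] by (auto simp: sf_scale_def)
    then have "m \<noteq> 0" "d * k dvd mdeg m" by (auto simp: MK_def split: if_splits)
    then have "d * k \<le> mdeg m" using mdeg_eq_0_iff[of m] by (auto intro: dvd_imp_le)
    moreover have "d \<le> d * k" using k by simp
    ultimately have "d \<le> B" using mB by linarith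
    then show "d \<in> {1..B}" using d by simp
  qed simp
  also have "{1..} \<inter> {1..B} = {1..B}" by auto
  also have "(\<Sum>d\<in>{1..B}. ?F d m) = (\<Sum>d\<in>{1..B}. \<Sum>n\<in>{1..B}. ww d n * co (PB (d * k) ^ n) m)"
  proof (rule sum.cong[OF refl])
    fix d assume d: "d \<in> {1..B}"
    have v: "vanish 1 (PB (d * k))" using d k by (intro vanish_PB1) simp
    have "?F d m = muhat d / real d * (\<Sum>n\<in>{1..B}. lc n * co (PB (d * k) ^ n) m)"
      using ln1p_trunc2[OF v mB] by (simp add: sf_scale_def co_PB)
    also have "\<dots> = (\<Sum>n\<in>{1..B}. ww d n * co (PB (d * k) ^ n) m)"
      by (simp add: sum_distrib_left ww_def lc_def mult.assoc)
    finally show "?F d m = \<dots>" .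
  qed
  also have "\<dots> = co (TT B k) m"
    by (simp add: TT_def co_cst_mult sum.cartesian_product case_prod_beta)
  finally show "co (PS k) m = co (TT B k) m" .
qed

definition Tup :: "nat \<Rightarrow> nat \<Rightarrow> (nat list \<times> nat list) set" where
  "Tup B r = {(ds, ns). length ds = r \<and> length ns = r \<and> set ds \<subseteq> {1..B} \<and> set ns \<subseteq> {1..B}}"

definition WW :: "nat list \<Rightarrow> nat list \<Rightarrow> nat list \<Rightarrow> real" where
  "WW lam ds ns = (\<Prod>i<length lam. ww (ds ! i) (ns ! i))"

definition PP :: "nat list \<Rightarrow> nat list \<Rightarrow> nat list \<Rightarrow> S" where
  "PP lam ds ns = (\<Prod>i<length lam. PB (ds ! i * lam ! i) ^ (ns ! i))"

lemma finite_Tup: "finite (Tup B r)"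
proof -
  have "Tup B r \<subseteq> {xs. set xs \<subseteq> {1..B} \<and> length xs = r} \<times> {xs. set xs \<subseteq> {1..B} \<and> length xs = r}"
    by (auto simp: Tup_def)
  moreover have "finite ({xs. set xs \<subseteq> {1..B} \<and> length xs = r} \<times> {xs. set xs \<subseteq> {1..B} \<and> length xs = r})"
    by (intro finite_cartesian_product finite_lists_length_eq) simp_all
  ultimately show ?thesis by (rule finite_subset)
qed

lemma WW_Cons: "WW (k # lam) (d # ds) (n # ns) = ww d n * WW lam ds ns"
  unfolding WW_def length_Cons prod.lessThan_Suc_shift by simp

lemma PP_Cons: "PP (k # lam) (d # ds) (n # ns) = PB (d * k) ^ n * PP lam ds ns"
  unfolding PP_def length_Cons prod.lessThan_Suc_shift by simp

lemma prod_TT_expand: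
  "prod_list (map (TT B) lam) = (\<Sum>t\<in>Tup B (length lam). cst (WW lam (fst t) (snd t)) * PP lam (fst t) (snd t))"
proof (induction lam)
  case Nil
  have "Tup B 0 = {([], [])}" by (auto simp: Tup_def)
  then show ?case by (simp add: WW_def PP_def cst_one)
next
  case (Cons k lam)
  let ?g = "\<lambda>t. cst (WW lam (fst t) (snd t)) * PP lam (fst t) (snd t)"
  let ?f = "\<lambda>p. cst (ww (fst p) (snd p)) * PB (fst p * k) ^ (snd p)"
  have "prod_list (map (TT B) (k # lam)) = TT B k * (\<Sum>t\<in>Tup B (length lam). ?g t)"
    using Cons by simp
  also have "\<dots> = (\<Sum>p\<in>{1..B} \<times> {1..B}. \<Sum>t\<in>Tup B (length lam). ?f p * ?g t)"
    by (simp add: TT_def sum_product)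
  also have "\<dots> = (\<Sum>pt\<in>({1..B} \<times> {1..B}) \<times> Tup B (length lam). ?f (fst pt) * ?g (snd pt))"
    by (simp add: sum.cartesian_product case_prod_beta)
  also have "\<dots> = (\<Sum>t\<in>Tup B (length (k # lam)). cst (WW (k # lam) (fst t) (snd t)) * PP (k # lam) (fst t) (snd t))"
  proof (rule sum.reindex_bij_witness[where i = "\<lambda>t. ((hd (fst t), hd (snd t)), (tl (fst t), tl (snd t)))"
        and j = "\<lambda>pt. (fst (fst pt) # fst (snd pt), snd (fst pt) # snd (snd pt))"], goal_cases)
    case (1 pt) then show ?case by simp
  next
    case (2 pt) then show ?case by (auto simp: Tup_def)
  next
    case (3 t)
    then obtain ds ns where "t = (ds, ns)" "length ds = Suc (length lam)" "length ns = Suc (length lam)"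
      by (auto simp: Tup_def)
    then show ?case by (cases ds; cases ns) auto
  next
    case (4 t)
    then obtain ds ns where "t = (ds, ns)" "length ds = Suc (length lam)" "length ns = Suc (length lam)"
       "set ds \<subseteq> {1..B}" "set ns \<subseteq> {1..B}"
      by (auto simp: Tup_def)
    then show ?case by (cases ds; cases ns) (auto simp: Tup_def)
  next
    case (5 pt)
    show ?case by (simp add: WW_Cons PP_Cons cst_mult algebra_simps)
  qed
  finally show ?case .
qed

lemma prod_list_map_concat: "prod_list (map f (concat xss)) = prod_list (map (\<lambda>xs. prod_list (map f xs)) xss)"
  by (induction xss) simp_all

lemma pbar_part_dpow:
  assumes "length ds = length lam" "length ns = length lam"
  shows "pbar_part (dpow_part lam ds ns) = co (PP lam ds ns)"
proof -
  have pp: "pbar_part xs = co (prod_list (map PB xs))" for xs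
  proof -
    have "map PB xs = map Ab (map pbar xs)" by (simp add: PB_def)
    then show ?thesis unfolding pbar_part_def co_prod_list[symmetric] by (simp only:)
  qed
  define L where "L = concat (map (\<lambda>i. replicate (ns ! i) (ds ! i * lam ! i)) [0..<length lam])"
  have "prod_list (map PB (rev (sort L))) = prod_list (map PB L)"
    by (simp only: prod_mset_prod_list[symmetric] mset_map mset_rev mset_sort)
  also have "\<dots> = prod_list (map (\<lambda>i. PB (ds ! i * lam ! i) ^ (ns ! i)) [0..<length lam])"
    by (simp add: L_def prod_list_map_concat comp_def)
  also have "\<dots> = PP lam ds ns"
    unfolding PP_def by (simp add: prod.distinct_set_conv_list[symmetric] atLeast0LessThan)
  finally show ?thesis by (simp add: pp dpow_part_def L_def)
qed

lemma vanish_PP: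
  assumes lam: "\<forall>x\<in>set lam. 0 < x" and ds: "length ds = length lam" "\<forall>x\<in>set ds. 0 < x"
  shows "vanish (\<Sum>i<length lam. ns ! i * (ds ! i * lam ! i)) (PP lam ds ns)"
  unfolding PP_def
proof (rule vanish_prod, simp)
  fix i assume "i \<in> {..<length lam}"
  then have "lam ! i > 0" "ds ! i > 0" using lam ds by (auto simp: nth_mem)
  then have "ds ! i * lam ! i \<ge> 1" by (simp add: Suc_le_eq)
  then show "vanish (ns ! i * (ds ! i * lam ! i)) (PB (ds ! i * lam ! i) ^ (ns ! i))"
    by (intro vanish_power vanish_PB)
qed

lemma part2:
  assumes P: "is_partition lam"
  shows "psum_part lam =
             sf_sum (\<lambda>(d, n). sf_scale
                       (\<Prod>i<length lam. muhat (d ! i) * (-1) ^ (n ! i + 1)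
                                          / (real (d ! i) * real (n ! i)))
                       (pbar_part (dpow_part lam d n)))
               {(d, n). length d = length lam \<and> length n = length lam \<and>
                        (\<forall>x \<in> set d. 0 < x) \<and> (\<forall>x \<in> set n. 0 < x)}"
    (is "_ = sf_sum ?G ?I")
proof (rule ext)
  fix m
  define B where "B = mdeg m"
  define r where "r = length lam"
  have pos: "\<forall>x\<in>set lam. 0 < x" using P by (simp add: is_partition_def)
  have G: "?G t m = WW lam (fst t) (snd t) * co (PP lam (fst t) (snd t)) m" if "t \<in> ?I" for t
    using that by (auto simp: sf_scale_def WW_def ww_def pbar_part_dpow)
  have "psum_part lam m = co (prod_list (map PS lam)) m"
  proof -
    have "map PS lam = map Ab (map psum lam)" by (simp add: PS_def)
    then show ?thesis unfolding psum_part_def co_prod_list[symmetric] by (simp only:)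
  qed
  also have "\<dots> = co (prod_list (map (TT B) lam)) m"
  proof -
    have "agr B (prod_list (map PS lam)) (prod_list (map (TT B) lam))"
      using pos by (intro agr_prod_list agr_PS_TT) (simp add: Suc_le_eq)
    then show ?thesis by (simp add: agr_def B_def)
  qed
  also have "\<dots> = (\<Sum>t\<in>Tup B r. WW lam (fst t) (snd t) * co (PP lam (fst t) (snd t)) m)"
    by (simp add: prod_TT_expand co_cst_mult r_def)
  also have "\<dots> = (\<Sum>t\<in>?I \<inter> Tup B r. ?G t m)"
  proof -
    have "?I \<inter> Tup B r = Tup B r" by (auto simp: Tup_def r_def)
    moreover have "t \<in> ?I" if "t \<in> Tup B r" for t using that by (auto simp: Tup_def r_def)
    ultimately show ?thesis using G by simp
  qed
  also have "\<dots> = sf_sum ?G ?I m"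
  proof (rule sf_sum_finite[symmetric, OF finite_Tup])
    fix t assume tI: "t \<in> ?I" and nz: "?G t m \<noteq> 0"
    obtain ds ns where t: "t = (ds, ns)" by force
    have len: "length ds = r" "length ns = r" and dpos: "\<forall>x\<in>set ds. 0 < x" and npos: "\<forall>x\<in>set ns. 0 < x"
      using tI t by (auto simp: r_def)
    have "co (PP lam ds ns) m \<noteq> 0" using nz G[OF tI] t by auto
    moreover have "vanish (\<Sum>i<length lam. ns ! i * (ds ! i * lam ! i)) (PP lam ds ns)"
      using pos len dpos by (intro vanish_PP) (simp_all add: r_def)
    ultimately have S: "(\<Sum>i<r. ns ! i * (ds ! i * lam ! i)) \<le> B"
      by (auto simp: vanish_def B_def r_def not_less[symmetric])
    have bound: "ds ! i \<le> B \<and> ns ! i \<le> B" if i: "i < r" for i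
    proof -
      have "lam ! i > 0" "ds ! i > 0" "ns ! i > 0" using i pos dpos npos len by (auto simp: nth_mem r_def)
      then have "ds ! i \<le> ns ! i * (ds ! i * lam ! i)" "ns ! i \<le> ns ! i * (ds ! i * lam ! i)"
        by (simp_all add: Suc_le_eq)
      moreover have "ns ! i * (ds ! i * lam ! i) \<le> (\<Sum>i<r. ns ! i * (ds ! i * lam ! i))"
        using i by (intro member_le_sum) simp_all
      ultimately show ?thesis using S by linarith
    qed
    have "set ds \<subseteq> {1..B}"
    proof
      fix x assume "x \<in> set ds"
      then obtain i where "i < r" "x = ds ! i" using len by (auto simp: in_set_conv_nth)
      then show "x \<in> {1..B}" using bound dpos \<open>x \<in> set ds\<close> by (auto simp: Suc_le_eq)
    qed
    moreover have "set ns \<subseteq> {1..B}"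
    proof
      fix x assume "x \<in> set ns"
      then obtain i where "i < r" "x = ns ! i" using len by (auto simp: in_set_conv_nth)
      then show "x \<in> {1..B}" using bound npos \<open>x \<in> set ns\<close> by (auto simp: Suc_le_eq)
    qed
    ultimately show "t \<in> Tup B r" using t len by (simp add: Tup_def)
  qed
  finally show "psum_part lam m = sf_sum ?G ?I m" .
qed

theorem mainTheorem13:
  shows "(\<forall>k::nat. k \<ge> 1 \<longrightarrow>
           psum k = sf_sum (\<lambda>d. sf_scale (muhat d / real d) (sf_ln1p (pbar (d * k)))) {1..})
       \<and> (\<forall>lam. is_partition lam \<longrightarrow>
           psum_part lam =
             sf_sum (\<lambda>(d, n). sf_scale
                       (\<Prod>i<length lam. muhat (d ! i) * (-1) ^ (n ! i + 1)
                                          / (real (d ! i) * real (n ! i)))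
                       (pbar_part (dpow_part lam d n)))
               {(d, n). length d = length lam \<and> length n = length lam \<and>
                        (\<forall>x \<in> set d. 0 < x) \<and> (\<forall>x \<in> set n. 0 < x)})"
  using part1 part2 by blast

end
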